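(* The linear program $\mathbf L_H^{\mathcal X,\mathcal T}$ is the dual of the linear program $\mathbf L_P^{\mathcal X,\mathcal T}$ (both described in the context). Moreover an optimal solution to $\mathbf L_H^{\mathcal X,\mathcal T}$ exists and the optimal value of $\mathbf L_H^{\mathcal X,\mathcal T}$ equals the optimal value of $\mathbf L_P^{\mathcal X,\mathcal T}$.
   Context: Fix integers $N\ge1$, $J\ge1$, times $0=t_0<t_1<\dots<t_N=T$, $\mathcal T=\{t_1,\dots,t_N\}$, $s_0>0$, strikes $0<x_1<\dots<x_J$, $x_0=0$, $\mathcal X=\{x_0,\dots,x_J\}$. $\mathbf C=(c_{j,n})_{0\le j\le J,1\le n\le N}$, $c_{0,n}=s_0$, are call prices satisfying: (C1) $s_0=c_{0,n}\ge c_{1,n}\ge\dots\ge c_{J,n}\ge0$; (C2) $1\ge\frac{c_{0,n}-c_{1,n}}{x_1}\ge\frac{c_{1,n}-c_{2,n}}{x_2-x_1}\ge\dots\ge\frac{c_{J-1,n}-c_{J,n}}{x_J-x_{J-1}}$; (C3) $c_{j,n+1}\ge c_{j,n}$ for $1\le n\le N-1$; (C4) $c_{J,N}=0$. Set $p_{0,n}=1-\frac{s_0-c_{1,n}}{x_1}$, $p_{j,n}=\frac{c_{j-1,n}-c_{j,n}}{x_j-x_{j-1}}-\frac{c_{j,n}-c_{j+1,n}}{x_{j+1}-x_j}$ ($1\le j<J$), $p_{J,n}=\frac{c_{J-1,n}-c_{J,n}}{x_J-x_{J-1}}$. Let $a:\mathcal X\times\mathcal T\to[0,\infty)$. $\mathbf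 L_P^{\mathcal X,\mathcal T}$: over $f_{j,n}\ge0$ ($0\le j\le J,1\le n\le N$) and $g^\delta_{j,k,n}\ge0$ ($\delta\in\{1,2\}$, $0\le j,k\le J$, $1\le n\le N-1$), maximise $\sum_{n,j}a(x_j,t_n)f_{j,n}$ subject to: (a) $\sum_k(g^1_{j,k,n}+g^2_{j,k,n})=p_{j,n}$, $1\le n\le N-1$; (b) $\sum_i(g^1_{i,j,n-1}+g^2_{i,j,n-1})=p_{j,n}$, $2\le n\le N$; (c),(d) $\sum_k(x_k-x_j)g^\delta_{j,k,n}=0$, $\delta=1,2$, $1\le n\le N-1$; (e) $f_{j,1}-\sum_kg^2_{j,k,1}\le0$, $f_{j,n}-\sum_kg^2_{j,k,n}+\sum_ig^2_{i,j,n-1}\le0$ for $1<n<N$, $f_{j,N}+\sum_ig^2_{i,j,N-1}\le p_{j,N}$ (all $0\le j\le J$). $\mathbf L_H^{\mathcal X,\mathcal T}$: over reals $e^1_{j,n},e^2_{j,n},v_{j,n}$ ($0\le j\le J$, $1\le n\le N$) and $d^1_{j,n},d^2_{j,n}$ ($1\le n\le N-1$), with $e^1_{j,N}=e^2_{j,1}=0$, minimise $\sum_{j,n}(e^1_{j,n}+e^2_{j,n})p_{j,n}+\sum_jv_{j,N}p_{j,N}$ subject to $v_{j,n}\ge0$ and (i) $v_{j,n}\ge a(x_j,t_n)$; (ii) $e^1_{j,n}+e^2_{k,n+1}+(x_k-x_j)d^1_{j,n}\ge0$; (iii) $e^1_{j,n}+e^2_{k,n+1}+(x_k-x_j)d^2_{j,n}-v_{j,n}+v_{k,n+1}\ge0$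 for all $0\le j,k\le J$, $1\le n\le N-1$. *)

theory Defs
  imports Complex_Main
begin

definition market_data ::
  "nat \<Rightarrow> nat \<Rightarrow> (nat \<Rightarrow> real) \<Rightarrow> real \<Rightarrow> (nat \<Rightarrow> real) \<Rightarrow> (nat \<Rightarrow> nat \<Rightarrow> real) \<Rightarrow> bool" where
  "market_data N J t s0 x c \<longleftrightarrow>
     N \<ge> 1 \<and> J \<ge> 1 \<and> t 0 = 0 \<and> (\<forall>n<N. t n < t (Suc n)) \<and> s0 > 0 \<and>
     x 0 = 0 \<and> (\<forall>j<J. x j < x (Suc j)) \<and>
     (\<forall>n\<in>{1..N}. c 0 n = s0) \<and>
     \<comment> \<open>(C1)\<close>
     (\<forall>n\<in>{1..N}. (\<forall>j<J. c j n \<ge> c (Suc j) n) \<and> c J n \<ge> 0) \<and>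
     \<comment> \<open>(C2)\<close>
     (\<forall>n\<in>{1..N}. 1 \<ge> (c 0 n - c 1 n) / x 1 \<and>
        (\<forall>j. 1 \<le> j \<and> j < J \<longrightarrow>
           (c (j-1) n - c j n) / (x j - x (j-1)) \<ge> (c j n - c (Suc j) n) / (x (Suc j) - x j))) \<and>
     \<comment> \<open>(C3)\<close>
     (\<forall>n. 1 \<le> n \<and> n \<le> N - 1 \<longrightarrow> (\<forall>j\<le>J. c j (Suc n) \<ge> c j n)) \<and>
     \<comment> \<open>(C4)\<close>
     c J N = 0"

definition pr :: "nat \<Rightarrow> real \<Rightarrow> (nat \<Rightarrow> real) \<Rightarrow> (nat \<Rightarrow> nat \<Rightarrow> real) \<Rightarrow> nat \<Rightarrow> nat \<Rightarrow> real" where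
  "pr J s0 x c j n =
     (if j = 0 then 1 - (s0 - c 1 n) / x 1
      else if j < J then (c (j-1) n - c j n) / (x j - x (j-1)) - (c j n - c (Suc j) n) / (x (Suc j) - x j)
      else (c (J-1) n - c J n) / (x J - x (J-1)))"

definition LP_feasible ::
  "nat \<Rightarrow> nat \<Rightarrow> (nat \<Rightarrow> real) \<Rightarrow> (nat \<Rightarrow> nat \<Rightarrow> real)
   \<Rightarrow> (nat \<Rightarrow> nat \<Rightarrow> real) \<Rightarrow> (nat \<Rightarrow> nat \<Rightarrow> nat \<Rightarrow> real) \<Rightarrow> (nat \<Rightarrow> nat \<Rightarrow> nat \<Rightarrow> real) \<Rightarrow> bool" where
  "LP_feasible N J x p f g1 g2 \<longleftrightarrow>
     (\<forall>j\<le>J. \<forall>n\<in>{1..N}. f j n \<ge> 0) \<and>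
     (\<forall>j\<le>J. \<forall>k\<le>J. \<forall>n\<in>{1..N-1}. g1 j k n \<ge> 0 \<and> g2 j k n \<ge> 0) \<and>
     \<comment> \<open>(a)\<close>
     (\<forall>j\<le>J. \<forall>n\<in>{1..N-1}. (\<Sum>k\<le>J. g1 j k n + g2 j k n) = p j n) \<and>
     \<comment> \<open>(b)\<close>
     (\<forall>j\<le>J. \<forall>n\<in>{2..N}. (\<Sum>i\<le>J. g1 i j (n-1) + g2 i j (n-1)) = p j n) \<and>
     \<comment> \<open>(c), (d)\<close>
     (\<forall>j\<le>J. \<forall>n\<in>{1..N-1}. (\<Sum>k\<le>J. (x k - x j) * g1 j k n) = 0
                           \<and> (\<Sum>k\<le>J. (x k - x j) * g2 j k n) = 0) \<and>
     \<comment> \<open>(e)\<close>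
     (\<forall>j\<le>J.
        (1 < N \<longrightarrow> f j 1 - (\<Sum>k\<le>J. g2 j k 1) \<le> 0) \<and>
        (\<forall>n. 1 < n \<and> n < N \<longrightarrow> f j n - (\<Sum>k\<le>J. g2 j k n) + (\<Sum>i\<le>J. g2 i j (n-1)) \<le> 0) \<and>
        f j N + (if 1 < N then (\<Sum>i\<le>J. g2 i j (N-1)) else 0) \<le> p j N)"

definition LP_obj ::
  "nat \<Rightarrow> nat \<Rightarrow> (real \<Rightarrow> real \<Rightarrow> real) \<Rightarrow> (nat \<Rightarrow> real) \<Rightarrow> (nat \<Rightarrow> real) \<Rightarrow> (nat \<Rightarrow> nat \<Rightarrow> real) \<Rightarrow> real" where
  "LP_obj N J a x t f = (\<Sum>n\<in>{1..N}. \<Sum>j\<le>J. a (x j) (t n) * f j n)"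

definition LH_feasible ::
  "nat \<Rightarrow> nat \<Rightarrow> (real \<Rightarrow> real \<Rightarrow> real) \<Rightarrow> (nat \<Rightarrow> real) \<Rightarrow> (nat \<Rightarrow> real)
   \<Rightarrow> (nat \<Rightarrow> nat \<Rightarrow> real) \<Rightarrow> (nat \<Rightarrow> nat \<Rightarrow> real) \<Rightarrow> (nat \<Rightarrow> nat \<Rightarrow> real)
   \<Rightarrow> (nat \<Rightarrow> nat \<Rightarrow> real) \<Rightarrow> (nat \<Rightarrow> nat \<Rightarrow> real) \<Rightarrow> bool" where
  "LH_feasible N J a x t e1 e2 v d1 d2 \<longleftrightarrow>
     (\<forall>j\<le>J. e1 j N = 0 \<and> e2 j 1 = 0) \<and>
     (\<forall>j\<le>J. \<forall>n\<in>{1..N}. v j n \<ge> 0 \<and> v j n \<ge> a (x j) (t n)) \<and>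
     (\<forall>j\<le>J. \<forall>k\<le>J. \<forall>n\<in>{1..N-1}.
        e1 j n + e2 k (Suc n) + (x k - x j) * d1 j n \<ge> 0 \<and>
        e1 j n + e2 k (Suc n) + (x k - x j) * d2 j n - v j n + v k (Suc n) \<ge> 0)"

definition LH_obj ::
  "nat \<Rightarrow> nat \<Rightarrow> (nat \<Rightarrow> nat \<Rightarrow> real) \<Rightarrow> (nat \<Rightarrow> nat \<Rightarrow> real) \<Rightarrow> (nat \<Rightarrow> nat \<Rightarrow> real)
   \<Rightarrow> (nat \<Rightarrow> nat \<Rightarrow> real) \<Rightarrow> real" where
  "LH_obj N J p e1 e2 v =
     (\<Sum>n\<in>{1..N}. \<Sum>j\<le>J. (e1 j n + e2 j n) * p j n) + (\<Sum>j\<le>J. v j N * p j N)"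

end

theory Submission
  imports Defs
begin


definition dotp :: "'k set \<Rightarrow> ('k \<Rightarrow> real) \<Rightarrow> ('k \<Rightarrow> real) \<Rightarrow> real" where
  "dotp K y z = (\<Sum>k\<in>K. y k * z k)"

lemma dotp_lin: "dotp K y (\<lambda>k. s * u k + t * w k) = s * dotp K y u + t * dotp K y w"
  by (simp add: dotp_def sum.distrib sum_distrib_left algebra_simps)

lemma dotp_lin_left: "dotp K (\<lambda>k. s * u k + t * w k) z = s * dotp K u z + t * dotp K w z"
  by (simp add: dotp_def sum.distrib sum_distrib_left algebra_simps)

lemma farkas_cone:
  assumes "finite K" "finite G"
  shows "(\<exists>l. (\<forall>g\<in>G. l g \<ge> 0) \<and> (\<forall>k\<in>K. b k = (\<Sum>g\<in>G. l g * a g k)))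
         \<or> (\<exists>y. (\<forall>g\<in>G. dotp K y (a g) \<ge> 0) \<and> dotp K y b < 0)"
  using assms(2)
proof (induction G arbitrary: a b rule: finite_induct)
  case empty
  show ?case
  proof (cases "\<forall>k\<in>K. b k = 0")
    case True then show ?thesis by auto
  next
    case False
    then obtain k0 where k0: "k0 \<in> K" "b k0 \<noteq> 0" by auto
    have "b k0 * b k0 \<le> (\<Sum>k\<in>K. b k * b k)"
      by (rule member_le_sum) (use k0 assms(1) in auto)
    moreover have "b k0 * b k0 > 0" using k0(2) not_real_square_gt_zero by blast
    ultimately have "dotp K (\<lambda>k. - b k) b < 0" unfolding dotp_def by (simp add: sum_negf)
    then show ?thesis by auto
  qed
next
  case (insert g0 G)
  show ?case
  proof (cases "\<exists>l. (\<forall>g\<in>insert g0 G. l g \<ge> 0) \<and> (\<forall>k\<in>K. b k = (\<Sum>g\<in>insert g0 G. l g * a g k))")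
    case True then show ?thesis by blast
  next
    case notcone: False
    have "\<not> (\<exists>l. (\<forall>g\<in>G. l g \<ge> 0) \<and> (\<forall>k\<in>K. b k = (\<Sum>g\<in>G. l g * a g k)))"
    proof
      assume "\<exists>l. (\<forall>g\<in>G. l g \<ge> 0) \<and> (\<forall>k\<in>K. b k = (\<Sum>g\<in>G. l g * a g k))"
      then obtain l where l: "\<forall>g\<in>G. l g \<ge> 0" "\<forall>k\<in>K. b k = (\<Sum>g\<in>G. l g * a g k)" by blast
      let ?l = "l(g0 := 0)"
      have "\<forall>g\<in>insert g0 G. ?l g \<ge> 0" using l by auto
      moreover have "\<forall>k\<in>K. b k = (\<Sum>g\<in>insert g0 G. ?l g * a g k)"
      proof
        fix k assume "k \<in> K"
        have "(\<Sum>g\<in>insert g0 G. ?l g * a g k) = (\<Sum>g\<in>G. ?l g * a g k)"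
          using insert by simp
        also have "\<dots> = (\<Sum>g\<in>G. l g * a g k)"
          using insert by (intro sum.cong) auto
        finally show "b k = (\<Sum>g\<in>insert g0 G. ?l g * a g k)" using l \<open>k\<in>K\<close> by simp
      qed
      ultimately show False using notcone by blast
    qed
    with insert.IH[of b a] obtain y where y: "\<forall>g\<in>G. dotp K y (a g) \<ge> 0" "dotp K y b < 0" by blast
    show ?thesis
    proof (cases "dotp K y (a g0) \<ge> 0")
      case True then show ?thesis using y by auto
    next
      case False
      define al where "al = dotp K y (a g0)"
      have al: "al < 0" using False al_def by simp
      define a' where "a' = (\<lambda>g k. dotp K y (a g) * a g0 k + (- al) * a g k)"
      define b' where "b' = (\<lambda>k. dotp K y b * a g0 k + (- al) * b k)"
      from insert.IH[of b' a'] show ?thesis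
      proof
        assume "\<exists>l. (\<forall>g\<in>G. l g \<ge> 0) \<and> (\<forall>k\<in>K. b' k = (\<Sum>g\<in>G. l g * a' g k))"
        then obtain m where m: "\<forall>g\<in>G. m g \<ge> 0" "\<forall>k\<in>K. b' k = (\<Sum>g\<in>G. m g * a' g k)" by blast
        define l0 where "l0 = (dotp K y b - (\<Sum>g\<in>G. m g * dotp K y (a g))) / al"
        have "(\<Sum>g\<in>G. m g * dotp K y (a g)) \<ge> 0" using m y by (intro sum_nonneg) auto
        hence "l0 \<ge> 0" unfolding l0_def using al y(2)
          by (intro divide_nonpos_neg) auto
        let ?l = "m(g0 := l0)"
        have "\<forall>g\<in>insert g0 G. ?l g \<ge> 0" using m \<open>l0 \<ge> 0\<close> by auto
        moreover have "\<forall>k\<in>K. b k = (\<Sum>g\<in>insert g0 G. ?l g * a g k)"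
        proof
          fix k assume k: "k \<in> K"
          have s1: "(\<Sum>g\<in>insert g0 G. ?l g * a g k) = l0 * a g0 k + (\<Sum>g\<in>G. m g * a g k)"
          proof -
            have "(\<Sum>g\<in>insert g0 G. ?l g * a g k) = l0 * a g0 k + (\<Sum>g\<in>G. ?l g * a g k)"
              using insert by simp
            also have "(\<Sum>g\<in>G. ?l g * a g k) = (\<Sum>g\<in>G. m g * a g k)"
              using insert by (intro sum.cong) auto
            finally show ?thesis .
          qed
          have "b' k = (\<Sum>g\<in>G. m g * a' g k)" using m k by blast
          also have "\<dots> = (\<Sum>g\<in>G. m g * dotp K y (a g)) * a g0 k + (- al) * (\<Sum>g\<in>G. m g * a g k)"
            unfolding a'_def by (simp add: sum_negf right_diff_distrib sum_subtractf distrib_left sum.distrib sum_distrib_left sum_distrib_right mult_ac)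
          finally have "dotp K y b * a g0 k + (- al) * b k
              = (\<Sum>g\<in>G. m g * dotp K y (a g)) * a g0 k + (- al) * (\<Sum>g\<in>G. m g * a g k)"
            unfolding b'_def .
          hence "al * b k = (dotp K y b - (\<Sum>g\<in>G. m g * dotp K y (a g))) * a g0 k + al * (\<Sum>g\<in>G. m g * a g k)"
            by (simp add: algebra_simps)
          also have "\<dots> = al * (l0 * a g0 k + (\<Sum>g\<in>G. m g * a g k))"
            unfolding l0_def using al by (simp add: field_simps)
          finally have "b k = l0 * a g0 k + (\<Sum>g\<in>G. m g * a g k)" using al by simp
          then show "b k = (\<Sum>g\<in>insert g0 G. ?l g * a g k)" using s1 by simp
        qed
        ultimately show ?thesis by blast
      next
        assume "\<exists>y'. (\<forall>g\<in>G. dotp K y' (a' g) \<ge> 0) \<and> dotp K y' b' < 0"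
        then obtain y' where y': "\<forall>g\<in>G. dotp K y' (a' g) \<ge> 0" "dotp K y' b' < 0" by blast
        define z where "z = (\<lambda>k. dotp K y' (a g0) * y k + (- al) * y' k)"
        have za: "dotp K z (a g) = dotp K y' (a' g)" for g
          unfolding z_def a'_def dotp_lin dotp_lin_left by (simp add: algebra_simps)
        have "dotp K z (a g0) = 0"
          unfolding z_def dotp_lin_left al_def by (simp add: algebra_simps)
        moreover have "dotp K z b = dotp K y' b'"
          unfolding z_def b'_def dotp_lin dotp_lin_left by (simp add: algebra_simps)
        ultimately show ?thesis using y' za by (intro disjI2 exI[of _ z]) auto
      qed
    qed
  qed
qed

definition rowsum :: "'v set \<Rightarrow> ('i \<Rightarrow> 'v \<Rightarrow> real) \<Rightarrow> ('v \<Rightarrow> real) \<Rightarrow> 'i \<Rightarrow> real" where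
  "rowsum V A y i = (\<Sum>v\<in>V. A i v * y v)"
definition colsum :: "'i set \<Rightarrow> ('i \<Rightarrow> 'v \<Rightarrow> real) \<Rightarrow> ('i \<Rightarrow> real) \<Rightarrow> 'v \<Rightarrow> real" where
  "colsum I A u v = (\<Sum>i\<in>I. u i * A i v)"

lemma sum_mult_delta:
  "(\<Sum>x\<in>S. f x * (if x = a then 1 else 0)) = (if finite S \<and> a \<in> S then f a else (0::real))"
proof -
  have "(\<Sum>x\<in>S. f x * (if x = a then 1 else 0)) = (\<Sum>x\<in>S. if x = a then f x else 0)"
    by (rule sum.cong) auto
  then show ?thesis by (cases "finite S") (simp_all add: sum.delta)
qed

lemma sum_mult_delta':
  "(\<Sum>x\<in>S. f x * (if a = x then 1 else 0)) = (if finite S \<and> a \<in> S then f a else (0::real))"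
  using sum_mult_delta[where f=f and S=S and a=a] by (simp add: eq_commute)

lemma sum_Inl_Inr:
  assumes "finite S" "finite T"
  shows "(\<Sum>g\<in>Inl ` S \<union> Inr ` T. h g) = (\<Sum>s\<in>S. h (Inl s)) + (\<Sum>t\<in>T. h (Inr t))"
  using assms by (subst sum.union_disjoint) (auto simp: sum.reindex)

lemma farkas_mixed:
  fixes A :: "'i \<Rightarrow> 'v \<Rightarrow> real"
  assumes fin: "finite I" "finite V" and sub: "Ieq \<subseteq> I" "Vn \<subseteq> V"
  shows "(\<exists>y. (\<forall>v\<in>Vn. y v \<ge> 0) \<and> (\<forall>i\<in>I-Ieq. rowsum V A y i \<le> b i) \<and> (\<forall>i\<in>Ieq. rowsum V A y i = b i))
   \<or> (\<exists>u. (\<forall>i\<in>I-Ieq. u i \<ge> 0) \<and> (\<forall>v\<in>Vn. colsum I A u v \<ge> 0) \<and> (\<forall>v\<in>V-Vn. colsum I A u v = 0)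
          \<and> (\<Sum>i\<in>I. b i * u i) < 0)"
proof -
  define Vg where "Vg = V \<times> {True} \<union> (V - Vn) \<times> {False}"
  define G :: "(('v \<times> bool) + 'i) set" where "G = Inl ` Vg \<union> Inr ` (I - Ieq)"
  define ag :: "(('v \<times> bool) + 'i) \<Rightarrow> 'i \<Rightarrow> real" where
    "ag = (\<lambda>g i. case g of Inl (v, s) \<Rightarrow> (if s then A i v else - A i v) | Inr i' \<Rightarrow> (if i' = i then 1 else 0))"
  have finVg: "finite Vg" using fin unfolding Vg_def by auto
  have finG: "finite G" using finVg fin unfolding G_def by auto
  have sumVg: "(\<Sum>w\<in>Vg. h w) = (\<Sum>v\<in>V. h (v, True)) + (\<Sum>v\<in>V. if v \<in> Vn then 0 else h (v, False))" for h :: "'v \<times> bool \<Rightarrow> real"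
  proof -
    have "(\<Sum>w\<in>Vg. h w) = (\<Sum>w\<in>V \<times> {True}. h w) + (\<Sum>w\<in>(V - Vn) \<times> {False}. h w)"
      unfolding Vg_def using fin by (intro sum.union_disjoint) auto
    also have "(\<Sum>w\<in>V \<times> {True}. h w) = (\<Sum>v\<in>V. h (v, True))"
    proof -
      have "V \<times> {True} = (\<lambda>v. (v, True)) ` V" by auto
      then show ?thesis by (simp add: sum.reindex inj_on_def)
    qed
    also have "(\<Sum>w\<in>(V - Vn) \<times> {False}. h w) = (\<Sum>v\<in>V - Vn. h (v, False))"
    proof -
      have "(V - Vn) \<times> {False} = (\<lambda>v. (v, False)) ` (V - Vn)" by auto
      then show ?thesis by (simp add: sum.reindex inj_on_def)
    qed
    also have "\<dots> = (\<Sum>v\<in>V. if v \<in> Vn then 0 else h (v, False))"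
      using fin by (simp add: sum.If_cases Diff_eq)
    finally show ?thesis .
  qed
  from farkas_cone[OF fin(1) finG, of b ag] show ?thesis
  proof
    assume "\<exists>l. (\<forall>g\<in>G. l g \<ge> 0) \<and> (\<forall>k\<in>I. b k = (\<Sum>g\<in>G. l g * ag g k))"
    then obtain l where l: "\<forall>g\<in>G. l g \<ge> 0" "\<forall>k\<in>I. b k = (\<Sum>g\<in>G. l g * ag g k)" by blast
    define y where "y = (\<lambda>v. l (Inl (v, True)) - (if v \<in> Vn then 0 else l (Inl (v, False))))"
    have key: "b i = rowsum V A y i + (if i \<in> I - Ieq then l (Inr i) else 0)" if i: "i \<in> I" for i
    proof -
      have "b i = (\<Sum>g\<in>G. l g * ag g i)" using l i by blast
      also have "\<dots> = (\<Sum>w\<in>Vg. l (Inl w) * ag (Inl w) i) + (\<Sum>i'\<in>I - Ieq. l (Inr i') * ag (Inr i') i)"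
        unfolding G_def using finVg fin by (intro sum_Inl_Inr) auto
      also have "(\<Sum>w\<in>Vg. l (Inl w) * ag (Inl w) i) = rowsum V A y i"
        unfolding sumVg rowsum_def y_def ag_def sum.distrib[symmetric]
        by (rule sum.cong) (auto simp: algebra_simps)
      also have "(\<Sum>i'\<in>I - Ieq. l (Inr i') * ag (Inr i') i) = (if i \<in> I - Ieq then l (Inr i) else 0)"
        unfolding ag_def using fin by (simp add: sum_mult_delta)
      finally show ?thesis .
    qed
    have "\<forall>v\<in>Vn. y v \<ge> 0"
      using l(1) unfolding y_def G_def Vg_def using sub by auto
    moreover have "\<forall>i\<in>I-Ieq. rowsum V A y i \<le> b i"
    proof
      fix i assume i: "i \<in> I - Ieq"
      have "l (Inr i) \<ge> 0" using l(1) i unfolding G_def by auto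
      then show "rowsum V A y i \<le> b i" using key[of i] i by auto
    qed
    moreover have "\<forall>i\<in>Ieq. rowsum V A y i = b i" using key sub by auto
    ultimately show ?thesis by blast
  next
    assume "\<exists>y. (\<forall>g\<in>G. dotp I y (ag g) \<ge> 0) \<and> dotp I y b < 0"
    then obtain u where u: "\<forall>g\<in>G. dotp I u (ag g) \<ge> 0" "dotp I u b < 0" by blast
    have d1: "dotp I u (ag (Inl (v, True))) = colsum I A u v" for v
      unfolding dotp_def colsum_def ag_def by simp
    have d2: "dotp I u (ag (Inl (v, False))) = - colsum I A u v" for v
      unfolding dotp_def colsum_def ag_def by (simp add: sum_negf)
    have d3: "i \<in> I \<Longrightarrow> dotp I u (ag (Inr i)) = u i" for i
      unfolding dotp_def ag_def using fin by (simp add: sum_mult_delta')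
    have "\<forall>i\<in>I-Ieq. u i \<ge> 0"
    proof
      fix i assume i: "i \<in> I - Ieq"
      then have "Inr i \<in> G" unfolding G_def by auto
      then show "u i \<ge> 0" using u(1) d3[of i] i by auto
    qed
    moreover have "\<forall>v\<in>V. colsum I A u v \<ge> 0"
    proof
      fix v assume "v \<in> V"
      then have "Inl (v, True) \<in> G" unfolding G_def Vg_def by auto
      then show "colsum I A u v \<ge> 0" using u(1) d1[of v] by auto
    qed
    moreover have "\<forall>v\<in>V-Vn. colsum I A u v \<le> 0"
    proof
      fix v assume "v \<in> V - Vn"
      then have "Inl (v, False) \<in> G" unfolding G_def Vg_def by auto
      then show "colsum I A u v \<le> 0" using u(1) d2[of v] by fastforce
    qed
    moreover have "(\<Sum>i\<in>I. b i * u i) < 0" using u(2) unfolding dotp_def by (simp add: mult.commute)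
    ultimately have "(\<forall>i\<in>I-Ieq. u i \<ge> 0) \<and> (\<forall>v\<in>Vn. colsum I A u v \<ge> 0) \<and> (\<forall>v\<in>V-Vn. colsum I A u v = 0)
          \<and> (\<Sum>i\<in>I. b i * u i) < 0" using sub by (meson DiffD1 antisym subsetD)
    then show ?thesis by blast
  qed
qed

definition pfeas :: "'i set \<Rightarrow> 'i set \<Rightarrow> 'v set \<Rightarrow> ('i \<Rightarrow> 'v \<Rightarrow> real) \<Rightarrow> ('i \<Rightarrow> real) \<Rightarrow> ('v \<Rightarrow> real) \<Rightarrow> bool" where
  "pfeas I Ieq V A b y \<longleftrightarrow> (\<forall>v\<in>V. y v \<ge> 0) \<and> (\<forall>i\<in>I-Ieq. rowsum V A y i \<le> b i) \<and> (\<forall>i\<in>Ieq. rowsum V A y i = b i)"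
definition dfeas :: "'i set \<Rightarrow> 'i set \<Rightarrow> 'v set \<Rightarrow> ('i \<Rightarrow> 'v \<Rightarrow> real) \<Rightarrow> ('v \<Rightarrow> real) \<Rightarrow> ('i \<Rightarrow> real) \<Rightarrow> bool" where
  "dfeas I Ieq V A c u \<longleftrightarrow> (\<forall>i\<in>I-Ieq. u i \<ge> 0) \<and> (\<forall>v\<in>V. colsum I A u v \<ge> c v)"

lemma gen_weak_duality:
  assumes fin: "finite I" "finite V" and sub: "Ieq \<subseteq> I"
    and y: "\<forall>v\<in>V. y v \<ge> 0" "\<forall>i\<in>I-Ieq. rowsum V A y i \<le> tau * b i" "\<forall>i\<in>Ieq. rowsum V A y i = tau * b i"
    and u: "\<forall>i\<in>I-Ieq. u i \<ge> 0" "\<forall>v\<in>V. colsum I A u v \<ge> sig * c v"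
  shows "sig * (\<Sum>v\<in>V. c v * y v) \<le> tau * (\<Sum>i\<in>I. b i * u i)"
proof -
  have "sig * (\<Sum>v\<in>V. c v * y v) = (\<Sum>v\<in>V. (sig * c v) * y v)"
    by (simp add: sum_distrib_left mult.assoc)
  also have "\<dots> \<le> (\<Sum>v\<in>V. colsum I A u v * y v)"
    using y(1) u(2) by (intro sum_mono mult_right_mono) auto
  also have "\<dots> = (\<Sum>i\<in>I. u i * rowsum V A y i)"
    unfolding colsum_def rowsum_def sum_distrib_left sum_distrib_right
    by (subst sum.swap) (simp add: mult.assoc)
  also have "\<dots> \<le> (\<Sum>i\<in>I. u i * (tau * b i))"
  proof (rule sum_mono)
    fix i assume i: "i \<in> I"
    show "u i * rowsum V A y i \<le> u i * (tau * b i)"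
    proof (cases "i \<in> Ieq")
      case True then show ?thesis using y(3) by simp
    next
      case False then show ?thesis using y(2) u(1) i by (intro mult_left_mono) auto
    qed
  qed
  also have "\<dots> = tau * (\<Sum>i\<in>I. b i * u i)"
    by (simp add: sum_distrib_left algebra_simps)
  finally show ?thesis .
qed

lemma weak_duality:
  assumes "finite I" "finite V" "Ieq \<subseteq> I" "pfeas I Ieq V A b y" "dfeas I Ieq V A c u"
  shows "(\<Sum>v\<in>V. c v * y v) \<le> (\<Sum>i\<in>I. b i * u i)"
  using gen_weak_duality[of I V Ieq y A 1 b u 1 c] assms unfolding pfeas_def dfeas_def by simp

datatype ('i, 'v) crow = CP 'i | CD 'v | CO

lemma sum_crow:
  assumes "finite I" "finite V"
  shows "(\<Sum>r\<in>CP ` I \<union> CD ` V \<union> {CO}. h r) = (\<Sum>i\<in>I. h (CP i)) + (\<Sum>v\<in>V. h (CD v)) + h CO"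
proof -
  have "(\<Sum>r\<in>CP ` I \<union> CD ` V \<union> {CO}. h r) = (\<Sum>r\<in>CP ` I \<union> CD ` V. h r) + h CO"
    using assms by (subst sum.union_disjoint) auto
  also have "(\<Sum>r\<in>CP ` I \<union> CD ` V. h r) = (\<Sum>r\<in>CP ` I. h r) + (\<Sum>r\<in>CD ` V. h r)"
    using assms by (subst sum.union_disjoint) auto
  also have "(\<Sum>r\<in>CP ` I. h r) = (\<Sum>i\<in>I. h (CP i))"
    by (subst sum.reindex) (auto simp: inj_on_def)
  also have "(\<Sum>r\<in>CD ` V. h r) = (\<Sum>v\<in>V. h (CD v))"
    by (subst sum.reindex) (auto simp: inj_on_def)
  finally show ?thesis .
qed

lemma lp_duality:
  fixes A :: "'i \<Rightarrow> 'v \<Rightarrow> real"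
  assumes fin: "finite I" "finite V" and sub: "Ieq \<subseteq> I"
    and y0: "pfeas I Ieq V A b y0" and u0: "dfeas I Ieq V A c u0"
  shows "\<exists>y u. pfeas I Ieq V A b y \<and> dfeas I Ieq V A c u \<and> (\<Sum>v\<in>V. c v * y v) = (\<Sum>i\<in>I. b i * u i)"
proof -
  define R :: "('i, 'v) crow set" where "R = CP ` I \<union> CD ` V \<union> {CO}"
  define Req :: "('i, 'v) crow set" where "Req = CP ` Ieq"
  define W :: "('v + 'i) set" where "W = Inl ` V \<union> Inr ` I"
  define Wn :: "('v + 'i) set" where "Wn = Inl ` V \<union> Inr ` (I - Ieq)"
  define M :: "('i, 'v) crow \<Rightarrow> ('v + 'i) \<Rightarrow> real" where
    "M = (\<lambda>r z. case r of
        CP i \<Rightarrow> (case z of Inl v \<Rightarrow> A i v | Inr _ \<Rightarrow> 0)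
      | CD v \<Rightarrow> (case z of Inl _ \<Rightarrow> 0 | Inr i \<Rightarrow> - A i v)
      | CO \<Rightarrow> (case z of Inl v \<Rightarrow> - c v | Inr i \<Rightarrow> b i))"
  define rhs :: "('i, 'v) crow \<Rightarrow> real" where
    "rhs = (\<lambda>r. case r of CP i \<Rightarrow> b i | CD v \<Rightarrow> - c v | CO \<Rightarrow> 0)"
  have finR: "finite R" and finW: "finite W" using fin unfolding R_def W_def by auto
  have subR: "Req \<subseteq> R" using sub unfolding R_def Req_def by auto
  have subW: "Wn \<subseteq> W" unfolding W_def Wn_def by auto
  have sumW: "(\<Sum>z\<in>W. h z) = (\<Sum>v\<in>V. h (Inl v)) + (\<Sum>i\<in>I. h (Inr i))" for h :: "'v + 'i \<Rightarrow> real"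
    unfolding W_def by (rule sum_Inl_Inr[OF fin(2) fin(1)])
  have sumR: "(\<Sum>r\<in>R. h r) = (\<Sum>i\<in>I. h (CP i)) + (\<Sum>v\<in>V. h (CD v)) + h CO" for h :: "('i, 'v) crow \<Rightarrow> real"
    unfolding R_def by (rule sum_crow[OF fin])
  from farkas_mixed[OF finR finW subR subW, of M rhs] show ?thesis
  proof
    assume "\<exists>z. (\<forall>v\<in>Wn. z v \<ge> 0) \<and> (\<forall>i\<in>R-Req. rowsum W M z i \<le> rhs i) \<and> (\<forall>i\<in>Req. rowsum W M z i = rhs i)"
    then obtain z where z: "\<forall>v\<in>Wn. z v \<ge> 0" "\<forall>i\<in>R-Req. rowsum W M z i \<le> rhs i" "\<forall>i\<in>Req. rowsum W M z i = rhs i"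
      by blast
    define y where "y = (\<lambda>v. z (Inl v))"
    define u where "u = (\<lambda>i. z (Inr i))"
    have rP: "rowsum W M z (CP i) = rowsum V A y i" for i
      unfolding rowsum_def sumW M_def y_def by simp
    have rD: "rowsum W M z (CD v) = - colsum I A u v" for v
      unfolding rowsum_def colsum_def sumW M_def u_def by (simp add: sum_negf mult.commute)
    have rO: "rowsum W M z CO = (\<Sum>i\<in>I. b i * u i) - (\<Sum>v\<in>V. c v * y v)" for v
      unfolding rowsum_def sumW M_def u_def y_def by (simp add: sum_negf)
    have py: "pfeas I Ieq V A b y"
      unfolding pfeas_def
    proof (intro conjI ballI)
      fix v assume "v \<in> V" then show "y v \<ge> 0" using z(1) unfolding y_def Wn_def by auto
    next
      fix i assume i: "i \<in> I - Ieq"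
      then have "CP i \<in> R - Req" unfolding R_def Req_def by auto
      then have "rowsum W M z (CP i) \<le> rhs (CP i)" using z(2) by blast
      then show "rowsum V A y i \<le> b i" using rP[of i] unfolding rhs_def by simp
    next
      fix i assume i: "i \<in> Ieq"
      then have "CP i \<in> Req" unfolding Req_def by auto
      then have "rowsum W M z (CP i) = rhs (CP i)" using z(3) by blast
      then show "rowsum V A y i = b i" using rP[of i] unfolding rhs_def by simp
    qed
    have du: "dfeas I Ieq V A c u"
      unfolding dfeas_def
    proof (intro conjI ballI)
      fix i assume "i \<in> I - Ieq" then show "u i \<ge> 0" using z(1) unfolding u_def Wn_def by auto
    next
      fix v assume "v \<in> V"
      then have "CD v \<in> R - Req" unfolding R_def Req_def by auto
      then have "rowsum W M z (CD v) \<le> rhs (CD v)" using z(2) by blast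
      then show "colsum I A u v \<ge> c v" using rD[of v] unfolding rhs_def by simp
    qed
    have "CO \<in> R - Req" unfolding R_def Req_def by auto
    then have "rowsum W M z CO \<le> rhs CO" using z(2) by blast
    then have "(\<Sum>i\<in>I. b i * u i) \<le> (\<Sum>v\<in>V. c v * y v)" using rO unfolding rhs_def by simp
    moreover have "(\<Sum>v\<in>V. c v * y v) \<le> (\<Sum>i\<in>I. b i * u i)"
      by (rule weak_duality[OF fin sub py du])
    ultimately show ?thesis using py du by (intro exI[of _ y] exI[of _ u]) auto
  next
    assume "\<exists>w. (\<forall>i\<in>R-Req. w i \<ge> 0) \<and> (\<forall>v\<in>Wn. colsum R M w v \<ge> 0) \<and> (\<forall>v\<in>W-Wn. colsum R M w v = 0)
          \<and> (\<Sum>i\<in>R. rhs i * w i) < 0"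
    then obtain w where w: "\<forall>i\<in>R-Req. w i \<ge> 0" "\<forall>v\<in>Wn. colsum R M w v \<ge> 0" "\<forall>v\<in>W-Wn. colsum R M w v = 0"
        "(\<Sum>i\<in>R. rhs i * w i) < 0" by blast
    define om where "om = (\<lambda>i. w (CP i))"
    define ep where "ep = (\<lambda>v. w (CD v))"
    define tau where "tau = w CO"
    have cl: "colsum R M w (Inl v) = colsum I A om v - tau * c v" for v
      unfolding colsum_def sumR M_def om_def tau_def by simp
    have cr: "colsum R M w (Inr i) = tau * b i - rowsum V A ep i" for i
      unfolding colsum_def rowsum_def sumR M_def ep_def tau_def by (simp add: sum_negf mult.commute)
    have rs: "(\<Sum>i\<in>R. rhs i * w i) = (\<Sum>i\<in>I. b i * om i) - (\<Sum>v\<in>V. c v * ep v)"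
      unfolding sumR rhs_def om_def ep_def by (simp add: sum_negf)
    have CO_in: "CO \<in> R - Req" unfolding R_def Req_def by auto
    have tau0: "tau \<ge> 0" using w(1) CO_in unfolding tau_def by blast
    have ep0: "\<forall>v\<in>V. ep v \<ge> 0"
    proof
      fix v assume "v \<in> V" then have "CD v \<in> R - Req" unfolding R_def Req_def by auto
      then show "ep v \<ge> 0" using w(1) unfolding ep_def by blast
    qed
    have om0: "\<forall>i\<in>I-Ieq. om i \<ge> 0"
    proof
      fix i assume "i \<in> I - Ieq" then have "CP i \<in> R - Req" unfolding R_def Req_def by auto
      then show "om i \<ge> 0" using w(1) unfolding om_def by blast
    qed
    have omc: "\<forall>v\<in>V. colsum I A om v \<ge> tau * c v"
    proof
      fix v assume "v \<in> V" then have "Inl v \<in> Wn" unfolding Wn_def by auto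
      then show "colsum I A om v \<ge> tau * c v" using w(2) cl[of v] by fastforce
    qed
    have epi: "\<forall>i\<in>I-Ieq. rowsum V A ep i \<le> tau * b i"
    proof
      fix i assume "i \<in> I - Ieq" then have "Inr i \<in> Wn" unfolding Wn_def by auto
      then show "rowsum V A ep i \<le> tau * b i" using w(2) cr[of i] by fastforce
    qed
    have epe: "\<forall>i\<in>Ieq. rowsum V A ep i = tau * b i"
    proof
      fix i assume "i \<in> Ieq" then have "Inr i \<in> W - Wn" unfolding W_def Wn_def using sub by auto
      then show "rowsum V A ep i = tau * b i" using w(3) cr[of i] by fastforce
    qed
    have neg: "(\<Sum>i\<in>I. b i * om i) < (\<Sum>v\<in>V. c v * ep v)" using w(4) rs by simp
    show ?thesis
    proof (cases "tau > 0")
      case True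
      have "tau * (\<Sum>v\<in>V. c v * ep v) \<le> tau * (\<Sum>i\<in>I. b i * om i)"
        by (rule gen_weak_duality[OF fin sub ep0 epi epe om0 omc])
      then have "(\<Sum>v\<in>V. c v * ep v) \<le> (\<Sum>i\<in>I. b i * om i)" using True by simp
      then show ?thesis using neg by simp
    next
      case False
      then have t0: "tau = 0" using tau0 by simp
      have "0 * (\<Sum>v\<in>V. c v * y0 v) \<le> 1 * (\<Sum>i\<in>I. b i * om i)"
        by (rule gen_weak_duality[OF fin sub]) (use y0 om0 omc t0 in \<open>auto simp: pfeas_def\<close>)
      moreover have "1 * (\<Sum>v\<in>V. c v * ep v) \<le> 0 * (\<Sum>i\<in>I. b i * u0 i)"
        by (rule gen_weak_duality[OF fin sub]) (use u0 ep0 epi epe t0 in \<open>auto simp: dfeas_def\<close>)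
      ultimately show ?thesis using neg by simp
    qed
  qed
qed



lemma md_facts:
  assumes "market_data N J t s0 x c"
  shows "N \<ge> 1" "J \<ge> 1" "s0 > 0" "x 0 = 0" "\<And>j. j < J \<Longrightarrow> x j < x (Suc j)"
    "\<And>n. n \<in> {1..N} \<Longrightarrow> c 0 n = s0"
    "\<And>n j. n \<in> {1..N} \<Longrightarrow> j < J \<Longrightarrow> c j n \<ge> c (Suc j) n"
    "\<And>n. n \<in> {1..N} \<Longrightarrow> c J n \<ge> 0"
    "\<And>n. n \<in> {1..N} \<Longrightarrow> 1 \<ge> (c 0 n - c 1 n) / x 1"
    "\<And>n j. n \<in> {1..N} \<Longrightarrow> 1 \<le> j \<Longrightarrow> j < J \<Longrightarrow>
        (c (j-1) n - c j n) / (x j - x (j-1)) \<ge> (c j n - c (Suc j) n) / (x (Suc j) - x j)"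
    "\<And>n j. 1 \<le> n \<Longrightarrow> n \<le> N - 1 \<Longrightarrow> j \<le> J \<Longrightarrow> c j (Suc n) \<ge> c j n"
    "c J N = 0"
  using assms unfolding market_data_def by auto

lemma x_mono:
  assumes "market_data N J t s0 x c" "i < j" "j \<le> J"
  shows "x i < x j"
  using assms(2,3)
proof (induction j)
  case 0 then show ?case by simp
next
  case (Suc j)
  have "x j < x (Suc j)" using md_facts(5)[OF assms(1)] Suc by auto
  then show ?case using Suc by (cases "i = j") auto
qed

lemma cJ_zero:
  assumes md: "market_data N J t s0 x c" and n: "n \<in> {1..N}"
  shows "c J n = 0"
proof -
  have "c J n \<le> c J (n + m)" if "n + m \<le> N" for m
    using that
  proof (induction m)
    case 0 then show ?case by simp
  next
    case (Suc m)
    have "c J (n + m) \<le> c J (Suc (n + m))"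
      using md_facts(11)[OF md, of "n + m" J] Suc.prems n by auto
    then show ?case using Suc by simp
  qed
  from this[of "N - n"] have "c J n \<le> c J N" using n by simp
  then show ?thesis using md_facts(12)[OF md] md_facts(8)[OF md n] by simp
qed

lemma pr_nonneg:
  assumes md: "market_data N J t s0 x c" and j: "j \<le> J" and n: "n \<in> {1..N}"
  shows "pr J s0 x c j n \<ge> 0"
proof -
  note f = md_facts[OF md]
  consider "j = 0" | "0 < j" "j < J" | "j = J" "j \<noteq> 0" using j by linarith
  then show ?thesis
  proof cases
    case 1 then show ?thesis using f(9)[OF n] f(6)[OF n] by (simp add: pr_def)
  next
    case 2 then show ?thesis using f(10)[OF n, of j] by (simp add: pr_def)
  next
    case 3
    have "J - 1 < J" using f(2) by simp
    then have "c (J-1) n \<ge> c J n" "x (J-1) < x J" using f(7)[OF n, of "J-1"] f(5)[of "J-1"] f(2) by auto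
    then show ?thesis using 3 by (simp add: pr_def)
  qed
qed

lemma telescope1:
  fixes D g :: "nat \<Rightarrow> real"
  assumes "m \<ge> 1"
  shows "(1 - D 0) * g 0 + (\<Sum>j\<in>{1..<m}. (D (j-1) - D j) * g j) + D (m-1) * g m
       = g 0 + (\<Sum>j<m. D j * (g (Suc j) - g j))"
  using assms
proof (induction m rule: dec_induct)
  case base then show ?case by (simp add: algebra_simps)
next
  case (step m)
  have "(\<Sum>j\<in>{1..<Suc m}. (D (j-1) - D j) * g j) = (\<Sum>j\<in>{1..<m}. (D (j-1) - D j) * g j) + (D (m-1) - D m) * g m"
    using step.hyps by simp
  then show ?case using step.IH by (simp add: algebra_simps)
qed

lemma abel1:
  fixes d s :: "nat \<Rightarrow> real"
  assumes "d 0 = 0" "m \<ge> 1"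
  shows "(\<Sum>j<m. (d j - d (Suc j)) * s j) = (\<Sum>j\<in>{1..<m}. d j * (s j - s (j-1))) - d m * s (m-1)"
  using assms(2)
proof (induction m rule: dec_induct)
  case base then show ?case using assms(1) by simp
next
  case (step m)
  have "(\<Sum>j\<in>{1..<Suc m}. d j * (s j - s (j-1))) = (\<Sum>j\<in>{1..<m}. d j * (s j - s (j-1))) + d m * (s m - s (m-1))"
    using step.hyps by simp
  then show ?case using step.IH by (simp add: algebra_simps)
qed

lemma expect_formula:
  assumes md: "market_data N J t s0 x c" and n: "n \<in> {1..N}"
  shows "(\<Sum>j\<le>J. pr J s0 x c j n * g j)
       = g 0 + (\<Sum>j<J. (c j n - c (Suc j) n) * ((g (Suc j) - g j) / (x (Suc j) - x j)))"
proof -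
  note f = md_facts[OF md]
  define D where "D = (\<lambda>j. (c j n - c (Suc j) n) / (x (Suc j) - x j))"
  have J1: "J \<ge> 1" using f(2) .
  have split: "{..J} = insert 0 (insert J {1..<J})" using J1 by auto
  have "(\<Sum>j\<le>J. pr J s0 x c j n * g j)
      = pr J s0 x c 0 n * g 0 + pr J s0 x c J n * g J + (\<Sum>j\<in>{1..<J}. pr J s0 x c j n * g j)"
    unfolding split using J1 by simp
  also have "pr J s0 x c 0 n = 1 - D 0" unfolding pr_def D_def using f(4) f(6)[OF n] by simp
  also have "pr J s0 x c J n = D (J-1)" unfolding pr_def D_def using J1 by simp
  also have "(\<Sum>j\<in>{1..<J}. pr J s0 x c j n * g j) = (\<Sum>j\<in>{1..<J}. (D (j-1) - D j) * g j)"
    by (rule sum.cong) (auto simp: pr_def D_def)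
  finally have "(\<Sum>j\<le>J. pr J s0 x c j n * g j) = (1 - D 0) * g 0 + (\<Sum>j\<in>{1..<J}. (D (j-1) - D j) * g j) + D (J-1) * g J"
    by simp
  also have "\<dots> = g 0 + (\<Sum>j<J. D j * (g (Suc j) - g j))" by (rule telescope1[OF J1])
  also have "(\<Sum>j<J. D j * (g (Suc j) - g j)) = (\<Sum>j<J. (c j n - c (Suc j) n) * ((g (Suc j) - g j) / (x (Suc j) - x j)))"
    by (rule sum.cong) (auto simp: D_def)
  finally show ?thesis .
qed

lemma slope_mono:
  fixes a b c Ga Gb Gc al be :: real
  assumes "a < b" "b < c" "Gb = al + be * b" "al + be * a \<le> Ga" "al + be * c \<le> Gc"
  shows "(Gb - Ga) / (b - a) \<le> (Gc - Gb) / (c - b)"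
proof -
  have "(Gb - Ga) / (b - a) \<le> be"
    using assms by (simp add: divide_le_eq algebra_simps)
  moreover have "be \<le> (Gc - Gb) / (c - b)"
    using assms by (simp add: le_divide_eq algebra_simps)
  ultimately show ?thesis by linarith
qed

lemma convex_order:
  assumes md: "market_data N J t s0 x c" and n: "1 \<le> n" "n < N"
    and H: "\<forall>j\<le>J. \<forall>k\<le>J. phi j + psi k + (x k - x j) * h j \<ge> 0"
  shows "(\<Sum>j\<le>J. pr J s0 x c j n * phi j) + (\<Sum>k\<le>J. pr J s0 x c k (Suc n) * psi k) \<ge> 0"
proof -
  note f = md_facts[OF md]
  have n1: "n \<in> {1..N}" and n2: "Suc n \<in> {1..N}" using n by auto
  define L where "L = (\<lambda>i y. - phi i - h i * (y - x i))"
  define Gam where "Gam = (\<lambda>y. Max ((\<lambda>i. L i y) ` {..J}))"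
  define g where "g = (\<lambda>k. Gam (x k))"
  define sig where "sig = (\<lambda>j. (g (Suc j) - g j) / (x (Suc j) - x j))"
  have Lle: "L i y \<le> Gam y" if "i \<le> J" for i y
    unfolding Gam_def using that by (intro Max_ge) auto
  have Gin: "\<exists>i\<le>J. Gam y = L i y" for y
  proof -
    have "Gam y \<in> (\<lambda>i. L i y) ` {..J}" unfolding Gam_def by (intro Max_in) auto
    then show ?thesis by auto
  qed
  have g1: "- phi j \<le> g j" if "j \<le> J" for j
    using Lle[OF that, of "x j"] unfolding g_def L_def by simp
  have g2: "g k \<le> psi k" if "k \<le> J" for k
  proof -
    have "Gam (x k) \<le> psi k" unfolding Gam_def
    proof (subst Max_le_iff, simp, simp, intro ballI)
      fix z assume "z \<in> (\<lambda>i. L i (x k)) ` {..J}"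
      then obtain i where i: "i \<le> J" "z = L i (x k)" by auto
      have "phi i + psi k + (x k - x i) * h i \<ge> 0" using H that i(1) by blast
      then show "z \<le> psi k" using i(2) unfolding L_def by (simp add: algebra_simps)
    qed
    then show ?thesis unfolding g_def .
  qed
  have sigmono: "sig (j - 1) \<le> sig j" if "1 \<le> j" "j < J" for j
  proof -
    obtain i where i: "i \<le> J" "Gam (x j) = L i (x j)" using Gin by blast
    have xs: "x (j-1) < x j" "x j < x (Suc j)" using x_mono[OF md, of "j-1" j] x_mono[OF md, of j "Suc j"] that by auto
    have "(g j - g (j-1)) / (x j - x (j-1)) \<le> (g (Suc j) - g j) / (x (Suc j) - x j)"
      unfolding g_def
    proof (rule slope_mono[OF xs, where al = "- phi i + h i * x i" and be = "- h i"])
      show "Gam (x j) = - phi i + h i * x i + - h i * x j" using i unfolding L_def by (simp add: algebra_simps)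
      show "- phi i + h i * x i + - h i * x (j - 1) \<le> Gam (x (j - 1))"
        using Lle[OF i(1), of "x (j-1)"] unfolding L_def by (simp add: algebra_simps)
      show "- phi i + h i * x i + - h i * x (Suc j) \<le> Gam (x (Suc j))"
        using Lle[OF i(1), of "x (Suc j)"] unfolding L_def by (simp add: algebra_simps)
    qed
    then show ?thesis unfolding sig_def using that by simp
  qed
  define d where "d = (\<lambda>j. c j (Suc n) - c j n)"
  have d0: "d 0 = 0" unfolding d_def using f(6)[OF n1] f(6)[OF n2] by simp
  have dJ: "d J = 0" unfolding d_def using cJ_zero[OF md n1] cJ_zero[OF md n2] by simp
  have dnn: "d j \<ge> 0" if "j \<le> J" for j unfolding d_def using f(11)[of n j] n that by auto
  have E1: "(\<Sum>j\<le>J. pr J s0 x c j n * g j) = g 0 + (\<Sum>j<J. (c j n - c (Suc j) n) * sig j)"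
    unfolding sig_def by (rule expect_formula[OF md n1])
  have E2: "(\<Sum>j\<le>J. pr J s0 x c j (Suc n) * g j) = g 0 + (\<Sum>j<J. (c j (Suc n) - c (Suc j) (Suc n)) * sig j)"
    unfolding sig_def by (rule expect_formula[OF md n2])
  have "(\<Sum>j\<le>J. pr J s0 x c j (Suc n) * g j) - (\<Sum>j\<le>J. pr J s0 x c j n * g j)
      = (\<Sum>j<J. (d j - d (Suc j)) * sig j)"
    unfolding E1 E2 d_def by (simp add: sum_subtractf[symmetric] algebra_simps)
  also have "\<dots> = (\<Sum>j\<in>{1..<J}. d j * (sig j - sig (j-1))) - d J * sig (J-1)"
    by (rule abel1[where d=d, OF d0 f(2)])
  also have "\<dots> \<ge> 0"
    using dJ by (simp, intro sum_nonneg mult_nonneg_nonneg) (use dnn sigmono in auto)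
  finally have co: "(\<Sum>j\<le>J. pr J s0 x c j n * g j) \<le> (\<Sum>j\<le>J. pr J s0 x c j (Suc n) * g j)" by simp
  have "(\<Sum>j\<le>J. pr J s0 x c j n * phi j) \<ge> (\<Sum>j\<le>J. pr J s0 x c j n * (- g j))"
    by (intro sum_mono mult_left_mono) (use g1 pr_nonneg[OF md _ n1] in \<open>force+\<close>)
  moreover have "(\<Sum>k\<le>J. pr J s0 x c k (Suc n) * psi k) \<ge> (\<Sum>k\<le>J. pr J s0 x c k (Suc n) * g k)"
    by (intro sum_mono mult_left_mono) (use g2 pr_nonneg[OF md _ n2] in \<open>auto\<close>)
  ultimately show ?thesis using co by (simp add: sum_negf)
qed



datatype lvar = VF nat nat | VG1 nat nat nat | VG2 nat nat nat
datatype lrow = RA nat nat | RB nat nat | RC nat nat | RD nat nat | RE nat nat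

fun Acf :: "(nat \<Rightarrow> real) \<Rightarrow> lrow \<Rightarrow> lvar \<Rightarrow> real" where
  "Acf x (RA j n) (VG1 j' k n') = (if j' = j then if n' = n then 1 else 0 else 0)"
| "Acf x (RA j n) (VG2 j' k n') = (if j' = j then if n' = n then 1 else 0 else 0)"
| "Acf x (RB k n) (VG1 j k' n') = (if k' = k then if Suc n' = n then 1 else 0 else 0)"
| "Acf x (RB k n) (VG2 j k' n') = (if k' = k then if Suc n' = n then 1 else 0 else 0)"
| "Acf x (RC j n) (VG1 j' k n') = (if j' = j then if n' = n then x k - x j else 0 else 0)"
| "Acf x (RD j n) (VG2 j' k n') = (if j' = j then if n' = n then x k - x j else 0 else 0)"
| "Acf x (RE j n) (VF j' n') = (if j' = j then if n' = n then 1 else 0 else 0)"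
| "Acf x (RE j n) (VG2 j' k n') = (if j' = j then if n' = n then -1 else 0 else 0)
                                 + (if k = j then if Suc n' = n then 1 else 0 else 0)"
| "Acf x _ _ = 0"

definition VS :: "nat \<Rightarrow> nat \<Rightarrow> lvar set" where
  "VS J N = (\<lambda>(j,n). VF j n) ` ({..J} \<times> {1..N})
          \<union> (\<lambda>(j,k,n). VG1 j k n) ` ({..J} \<times> {..J} \<times> {1..N-1})
          \<union> (\<lambda>(j,k,n). VG2 j k n) ` ({..J} \<times> {..J} \<times> {1..N-1})"

definition IEQ :: "nat \<Rightarrow> nat \<Rightarrow> lrow set" where
  "IEQ J N = (\<lambda>(j,n). RA j n) ` ({..J} \<times> {1..N-1}) \<union> (\<lambda>(j,n). RB j n) ` ({..J} \<times> {2..N})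
           \<union> (\<lambda>(j,n). RC j n) ` ({..J} \<times> {1..N-1}) \<union> (\<lambda>(j,n). RD j n) ` ({..J} \<times> {1..N-1})"

definition IIN :: "nat \<Rightarrow> nat \<Rightarrow> lrow set" where
  "IIN J N = (\<lambda>(j,n). RE j n) ` ({..J} \<times> {1..N})"

lemma sum_img2:
  assumes "\<And>a b a' b'. f a b = f a' b' \<Longrightarrow> a = a' \<and> b = b'"
  shows "(\<Sum>z\<in>(\<lambda>(a,b). f a b) ` (A \<times> B). h z) = (\<Sum>a\<in>A. \<Sum>b\<in>B. h (f a b))"
proof -
  have "inj_on (\<lambda>(a,b). f a b) (A \<times> B)" using assms by (auto simp: inj_on_def)
  then have "(\<Sum>z\<in>(\<lambda>(a,b). f a b) ` (A \<times> B). h z) = (\<Sum>z\<in>A \<times> B. h (case z of (a,b) \<Rightarrow> f a b))"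
    by (simp add: sum.reindex)
  also have "\<dots> = (\<Sum>a\<in>A. \<Sum>b\<in>B. h (f a b))"
    by (simp add: sum.cartesian_product split_def)
  finally show ?thesis .
qed

lemma sum_img3:
  assumes "\<And>a b c a' b' c'. f a b c = f a' b' c' \<Longrightarrow> a = a' \<and> b = b' \<and> c = c'"
  shows "(\<Sum>z\<in>(\<lambda>(a,b,c). f a b c) ` (A \<times> B \<times> C). h z) = (\<Sum>a\<in>A. \<Sum>b\<in>B. \<Sum>c\<in>C. h (f a b c))"
proof -
  have "inj_on (\<lambda>(a,b,c). f a b c) (A \<times> B \<times> C)" using assms by (auto simp: inj_on_def)
  then have "(\<Sum>z\<in>(\<lambda>(a,b,c). f a b c) ` (A \<times> B \<times> C). h z) = (\<Sum>z\<in>A \<times> B \<times> C. h (case z of (a,b,c) \<Rightarrow> f a b c))"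
    by (simp add: sum.reindex)
  also have "\<dots> = (\<Sum>a\<in>A. \<Sum>b\<in>B. \<Sum>c\<in>C. h (f a b c))"
    by (simp add: sum.cartesian_product split_def)
  finally show ?thesis .
qed

lemmas img_inst = sum_img2[where f=VF, simplified] sum_img3[where f=VG1, simplified] sum_img3[where f=VG2, simplified]
  sum_img2[where f=RA, simplified] sum_img2[where f=RB, simplified] sum_img2[where f=RC, simplified]
  sum_img2[where f=RD, simplified] sum_img2[where f=RE, simplified]

lemma sumVS:
  "(\<Sum>v\<in>VS J N. h v) = (\<Sum>j\<le>J. \<Sum>n\<in>{1..N}. h (VF j n)) + (\<Sum>j\<le>J. \<Sum>k\<le>J. \<Sum>n\<in>{1..N-1}. h (VG1 j k n))
      + (\<Sum>j\<le>J. \<Sum>k\<le>J. \<Sum>n\<in>{1..N-1}. h (VG2 j k n))"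
  unfolding VS_def
  by (subst sum.union_disjoint, force, force, force, subst sum.union_disjoint, force, force, force,
      simp only: img_inst)

lemma sumIEQ:
  "(\<Sum>r\<in>IEQ J N. h r) = (\<Sum>j\<le>J. \<Sum>n\<in>{1..N-1}. h (RA j n)) + (\<Sum>j\<le>J. \<Sum>n\<in>{2..N}. h (RB j n))
      + (\<Sum>j\<le>J. \<Sum>n\<in>{1..N-1}. h (RC j n)) + (\<Sum>j\<le>J. \<Sum>n\<in>{1..N-1}. h (RD j n))"
  unfolding IEQ_def
  by (subst sum.union_disjoint, force, force, force, subst sum.union_disjoint, force, force, force,
      subst sum.union_disjoint, force, force, force, simp only: img_inst)

lemma sumIIN:
  "(\<Sum>r\<in>IIN J N. h r) = (\<Sum>j\<le>J. \<Sum>n\<in>{1..N}. h (RE j n))"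
  unfolding IIN_def by (simp only: img_inst)

lemma fin_sets: "finite (VS J N)" "finite (IEQ J N)" "finite (IIN J N)"
  unfolding VS_def IEQ_def IIN_def by auto

lemma IEQ_IIN: "IEQ J N \<inter> IIN J N = {}" "(IEQ J N \<union> IIN J N) - IEQ J N = IIN J N"
  unfolding IEQ_def IIN_def by auto

lemma sum_if_const: "(\<Sum>x\<in>S. if P then f x else 0) = (if P then (\<Sum>x\<in>S. f x) else (0::real))"
  by simp

lemma if_mult0: "(if P then a else 0) * (y::real) = (if P then a * y else 0)"
  and mult_if0: "(y::real) * (if P then a else 0) = (if P then y * a else 0)"
  by auto

lemma sum_Suc_delta:
  assumes "finite S"
  shows "(\<Sum>n'\<in>S. if Suc n' = n then f n' else 0) = (if n \<noteq> 0 \<and> n - 1 \<in> S then f (n - 1) else (0::real))"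
proof (cases n)
  case 0 then show ?thesis by simp
next
  case (Suc m)
  then have "(\<Sum>n'\<in>S. if Suc n' = n then f n' else 0) = (\<Sum>n'\<in>S. if n' = m then f n' else 0)" by simp
  then show ?thesis using assms Suc by (simp add: sum.delta)
qed

lemmas dsimps = sum_if_const if_mult0 mult_if0 sum.delta sum.delta' sum_Suc_delta
  distrib_left distrib_right sum.distrib

lemma rowA:
  assumes "j \<le> J" "1 \<le> n" "n < N"
  shows "rowsum (VS J N) (Acf x) y (RA j n) = (\<Sum>k\<le>J. y (VG1 j k n) + y (VG2 j k n))"
  unfolding rowsum_def sumVS using assms by (simp add: dsimps) arith?

lemma rowB:
  assumes "k \<le> J" "2 \<le> n" "n \<le> N"
  shows "rowsum (VS J N) (Acf x) y (RB k n) = (\<Sum>i\<le>J. y (VG1 i k (n-1)) + y (VG2 i k (n-1)))"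
  unfolding rowsum_def sumVS using assms by (simp add: dsimps) arith?

lemma rowC:
  assumes "j \<le> J" "1 \<le> n" "n < N"
  shows "rowsum (VS J N) (Acf x) y (RC j n) = (\<Sum>k\<le>J. (x k - x j) * y (VG1 j k n))"
  unfolding rowsum_def sumVS using assms by (simp add: dsimps) arith?

lemma rowD:
  assumes "j \<le> J" "1 \<le> n" "n < N"
  shows "rowsum (VS J N) (Acf x) y (RD j n) = (\<Sum>k\<le>J. (x k - x j) * y (VG2 j k n))"
  unfolding rowsum_def sumVS using assms by (simp add: dsimps) arith?

lemma rowE:
  assumes "j \<le> J" "1 \<le> n" "n \<le> N"
  shows "rowsum (VS J N) (Acf x) y (RE j n) = y (VF j n) - (if n < N then (\<Sum>k\<le>J. y (VG2 j k n)) else 0)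
           + (if 2 \<le> n then (\<Sum>i\<le>J. y (VG2 i j (n-1))) else 0)"
  unfolding rowsum_def sumVS using assms by (simp add: dsimps sum_negf) arith?

lemma sumIS:
  "(\<Sum>r\<in>IEQ J N \<union> IIN J N. h r) = (\<Sum>r\<in>IEQ J N. h r) + (\<Sum>r\<in>IIN J N. h r)"
  by (rule sum.union_disjoint) (auto simp: fin_sets IEQ_IIN)

lemma colF:
  assumes "j \<le> J" "1 \<le> n" "n \<le> N"
  shows "colsum (IEQ J N \<union> IIN J N) (Acf x) u (VF j n) = u (RE j n)"
  unfolding colsum_def sumIS sumIEQ sumIIN using assms by (simp add: dsimps) arith?

lemma colG1:
  assumes "j \<le> J" "k \<le> J" "1 \<le> n" "n < N"
  shows "colsum (IEQ J N \<union> IIN J N) (Acf x) u (VG1 j k n) = u (RA j n) + u (RB k (Suc n)) + (x k - x j) * u (RC j n)"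
  unfolding colsum_def sumIS sumIEQ sumIIN using assms by (simp add: dsimps) arith?

lemma colG2:
  assumes "j \<le> J" "k \<le> J" "1 \<le> n" "n < N"
  shows "colsum (IEQ J N \<union> IIN J N) (Acf x) u (VG2 j k n)
     = u (RA j n) + u (RB k (Suc n)) + (x k - x j) * u (RD j n) - u (RE j n) + u (RE k (Suc n))"
  unfolding colsum_def sumIS sumIEQ sumIIN using assms by (simp add: dsimps) arith?



definition bv :: "(nat \<Rightarrow> nat \<Rightarrow> real) \<Rightarrow> nat \<Rightarrow> lrow \<Rightarrow> real" where
  "bv p N r = (case r of RA j n \<Rightarrow> p j n | RB j n \<Rightarrow> p j n | RC j n \<Rightarrow> 0 | RD j n \<Rightarrow> 0
                | RE j n \<Rightarrow> (if n = N then p j n else 0))"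

definition cv :: "(real \<Rightarrow> real \<Rightarrow> real) \<Rightarrow> (nat \<Rightarrow> real) \<Rightarrow> (nat \<Rightarrow> real) \<Rightarrow> lvar \<Rightarrow> real" where
  "cv a x t v = (case v of VF j n \<Rightarrow> a (x j) (t n) | VG1 j k n \<Rightarrow> 0 | VG2 j k n \<Rightarrow> 0)"

lemma ball_img2: "(\<forall>z\<in>(\<lambda>(a,b). f a b) ` (A \<times> B). P z) \<longleftrightarrow> (\<forall>a\<in>A. \<forall>b\<in>B. P (f a b))"
  by auto
lemma ball_img3: "(\<forall>z\<in>(\<lambda>(a,b,c). f a b c) ` (A \<times> B \<times> C). P z) \<longleftrightarrow> (\<forall>a\<in>A. \<forall>b\<in>B. \<forall>c\<in>C. P (f a b c))"
  by auto

lemma ballVS: "(\<forall>v\<in>VS J N. P v) \<longleftrightarrow> (\<forall>j\<le>J. \<forall>n\<in>{1..N}. P (VF j n)) \<and> (\<forall>j\<le>J. \<forall>k\<le>J. \<forall>n\<in>{1..N-1}. P (VG1 j k n))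
    \<and> (\<forall>j\<le>J. \<forall>k\<le>J. \<forall>n\<in>{1..N-1}. P (VG2 j k n))"
  unfolding VS_def ball_Un ball_img2 ball_img3 by (simp add: Ball_def) blast

lemma ballIEQ: "(\<forall>r\<in>IEQ J N. P r) \<longleftrightarrow> (\<forall>j\<le>J. \<forall>n\<in>{1..N-1}. P (RA j n)) \<and> (\<forall>j\<le>J. \<forall>n\<in>{2..N}. P (RB j n))
    \<and> (\<forall>j\<le>J. \<forall>n\<in>{1..N-1}. P (RC j n)) \<and> (\<forall>j\<le>J. \<forall>n\<in>{1..N-1}. P (RD j n))"
  unfolding IEQ_def ball_Un ball_img2 by (simp add: Ball_def)

lemma ballIIN: "(\<forall>r\<in>IIN J N. P r) \<longleftrightarrow> (\<forall>j\<le>J. \<forall>n\<in>{1..N}. P (RE j n))"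
  unfolding IIN_def ball_img2 by (simp add: Ball_def)

lemma E_equiv:
  fixes f G H P :: "nat \<Rightarrow> real"
  assumes "N \<ge> 1"
  shows "(\<forall>n\<in>{1..N}. f n - (if n < N then G n else 0) + (if 2 \<le> n then H n else 0) \<le> (if n = N then P n else 0))
    \<longleftrightarrow> ((1 < N \<longrightarrow> f 1 - G 1 \<le> 0) \<and> (\<forall>n. 1 < n \<and> n < N \<longrightarrow> f n - G n + H n \<le> 0)
         \<and> f N + (if 1 < N then H N else 0) \<le> P N)"
proof
  assume L: "\<forall>n\<in>{1..N}. f n - (if n < N then G n else 0) + (if 2 \<le> n then H n else 0) \<le> (if n = N then P n else 0)"
  have "1 < N \<longrightarrow> f 1 - G 1 \<le> 0" using L[rule_format, of 1] by auto
  moreover have "\<forall>n. 1 < n \<and> n < N \<longrightarrow> f n - G n + H n \<le> 0"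
  proof (intro allI impI)
    fix n assume "1 < n \<and> n < N" then show "f n - G n + H n \<le> 0" using L[rule_format, of n] by auto
  qed
  moreover have "f N + (if 1 < N then H N else 0) \<le> P N"
    using L[rule_format, of N] assms by (auto split: if_splits)
  ultimately show "(1 < N \<longrightarrow> f 1 - G 1 \<le> 0) \<and> (\<forall>n. 1 < n \<and> n < N \<longrightarrow> f n - G n + H n \<le> 0)
         \<and> f N + (if 1 < N then H N else 0) \<le> P N" by blast
next
  assume R: "(1 < N \<longrightarrow> f 1 - G 1 \<le> 0) \<and> (\<forall>n. 1 < n \<and> n < N \<longrightarrow> f n - G n + H n \<le> 0)
         \<and> f N + (if 1 < N then H N else 0) \<le> P N"
  show "\<forall>n\<in>{1..N}. f n - (if n < N then G n else 0) + (if 2 \<le> n then H n else 0) \<le> (if n = N then P n else 0)"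
  proof
    fix n assume n: "n \<in> {1..N}"
    consider "n = N" | "n = 1" "1 < N" | "1 < n" "n < N" using n by fastforce
    then show "f n - (if n < N then G n else 0) + (if 2 \<le> n then H n else 0) \<le> (if n = N then P n else 0)"
    proof cases
      case 1 then show ?thesis using R by (auto split: if_splits)
    next
      case 2 then show ?thesis using R by auto
    next
      case 3 then show ?thesis using R by auto
    qed
  qed
qed

lemma primal_equiv:
  assumes N: "N \<ge> 1"
  shows "pfeas (IEQ J N \<union> IIN J N) (IEQ J N) (VS J N) (Acf x) (bv p N) y \<longleftrightarrow>
     LP_feasible N J x p (\<lambda>j n. y (VF j n)) (\<lambda>j k n. y (VG1 j k n)) (\<lambda>j k n. y (VG2 j k n))"
proof -
  have diff: "(IEQ J N \<union> IIN J N) - IEQ J N = IIN J N" by (rule IEQ_IIN(2))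
  have rA: "(\<forall>j\<le>J. \<forall>n\<in>{1..N-1}. rowsum (VS J N) (Acf x) y (RA j n) = bv p N (RA j n))
     \<longleftrightarrow> (\<forall>j\<le>J. \<forall>n\<in>{1..N-1}. (\<Sum>k\<le>J. y (VG1 j k n) + y (VG2 j k n)) = p j n)"
    using rowA[of _ J _ N x y] by (auto simp: bv_def)
  have rB: "(\<forall>j\<le>J. \<forall>n\<in>{2..N}. rowsum (VS J N) (Acf x) y (RB j n) = bv p N (RB j n))
     \<longleftrightarrow> (\<forall>j\<le>J. \<forall>n\<in>{2..N}. (\<Sum>i\<le>J. y (VG1 i j (n-1)) + y (VG2 i j (n-1))) = p j n)"
    using rowB[of _ J _ N x y] by (auto simp: bv_def)
  have rCD: "(\<forall>j\<le>J. \<forall>n\<in>{1..N-1}. rowsum (VS J N) (Acf x) y (RC j n) = bv p N (RC j n)) \<and>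
             (\<forall>j\<le>J. \<forall>n\<in>{1..N-1}. rowsum (VS J N) (Acf x) y (RD j n) = bv p N (RD j n))
     \<longleftrightarrow> (\<forall>j\<le>J. \<forall>n\<in>{1..N-1}. (\<Sum>k\<le>J. (x k - x j) * y (VG1 j k n)) = 0
                           \<and> (\<Sum>k\<le>J. (x k - x j) * y (VG2 j k n)) = 0)"
    using rowC[of _ J _ N x y] rowD[of _ J _ N x y] by (auto simp: bv_def)
  have rE: "(\<forall>j\<le>J. \<forall>n\<in>{1..N}. rowsum (VS J N) (Acf x) y (RE j n) \<le> bv p N (RE j n))
     \<longleftrightarrow> (\<forall>j\<le>J.
        (1 < N \<longrightarrow> y (VF j 1) - (\<Sum>k\<le>J. y (VG2 j k 1)) \<le> 0) \<and>
        (\<forall>n. 1 < n \<and> n < N \<longrightarrow> y (VF j n) - (\<Sum>k\<le>J. y (VG2 j k n)) + (\<Sum>i\<le>J. y (VG2 i j (n-1))) \<le> 0) \<and>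
        y (VF j N) + (if 1 < N then (\<Sum>i\<le>J. y (VG2 i j (N-1))) else 0) \<le> p j N)"
  proof -
    have "(\<forall>n\<in>{1..N}. rowsum (VS J N) (Acf x) y (RE j n) \<le> bv p N (RE j n)) \<longleftrightarrow>
       (\<forall>n\<in>{1..N}. y (VF j n) - (if n < N then (\<Sum>k\<le>J. y (VG2 j k n)) else 0)
           + (if 2 \<le> n then (\<Sum>i\<le>J. y (VG2 i j (n-1))) else 0) \<le> (if n = N then p j n else 0))"
      if "j \<le> J" for j
      using rowE[OF that, of _ N x y] by (auto simp: bv_def)
    then show ?thesis
      using E_equiv[OF N, of "\<lambda>n. y (VF _ n)"] by simp
  qed
  show ?thesis
    unfolding pfeas_def LP_feasible_def diff ballVS ballIEQ ballIIN rA rB rCD rE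
    by blast
qed



definition uof :: "(nat \<Rightarrow> nat \<Rightarrow> real) \<Rightarrow> (nat \<Rightarrow> nat \<Rightarrow> real) \<Rightarrow> (nat \<Rightarrow> nat \<Rightarrow> real) \<Rightarrow> (nat \<Rightarrow> nat \<Rightarrow> real)
   \<Rightarrow> (nat \<Rightarrow> nat \<Rightarrow> real) \<Rightarrow> lrow \<Rightarrow> real" where
  "uof e1 e2 vv d1 d2 r = (case r of RA j n \<Rightarrow> e1 j n | RB j n \<Rightarrow> e2 j n | RC j n \<Rightarrow> d1 j n | RD j n \<Rightarrow> d2 j n
     | RE j n \<Rightarrow> vv j n)"

lemma dual_to_LH:
  assumes N: "N \<ge> 1" and d: "dfeas (IEQ J N \<union> IIN J N) (IEQ J N) (VS J N) (Acf x) (cv a x t) u"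
  shows "LH_feasible N J a x t (\<lambda>j n. if n < N then u (RA j n) else 0) (\<lambda>j n. if 2 \<le> n then u (RB j n) else 0)
           (\<lambda>j n. u (RE j n)) (\<lambda>j n. u (RC j n)) (\<lambda>j n. u (RD j n))"
proof -
  have d1: "\<forall>j\<le>J. \<forall>n\<in>{1..N}. u (RE j n) \<ge> 0"
    and d2: "\<forall>v\<in>VS J N. colsum (IEQ J N \<union> IIN J N) (Acf x) u v \<ge> cv a x t v"
    using d unfolding dfeas_def IEQ_IIN(2) ballIIN by auto
  note d2' = d2[unfolded ballVS]
  show ?thesis unfolding LH_feasible_def
  proof (intro conjI allI impI ballI)
    fix j n assume j: "j \<le> J" and n: "n \<in> {1..N}"
    show "u (RE j n) \<ge> 0" using d1 j n by blast
    have nn: "1 \<le> n" "n \<le> N" using n by auto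
    have "cv a x t (VF j n) \<le> colsum (IEQ J N \<union> IIN J N) (Acf x) u (VF j n)" using d2' j n by blast
    then show "u (RE j n) \<ge> a (x j) (t n)" using colF[OF j nn, of x u] by (simp add: cv_def)
  next
    fix j k n assume j: "j \<le> J" and k: "k \<le> J" and n: "n \<in> {1..N-1}"
    have nn: "1 \<le> n" "n < N" using n N by auto
    have "cv a x t (VG1 j k n) \<le> colsum (IEQ J N \<union> IIN J N) (Acf x) u (VG1 j k n)" using d2' j k n by blast
    then show "0 \<le> (if n < N then u (RA j n) else 0) + (if 2 \<le> Suc n then u (RB k (Suc n)) else 0) + (x k - x j) * u (RC j n)"
      using colG1[OF j k nn, of x u] nn by (simp add: cv_def)
    have "cv a x t (VG2 j k n) \<le> colsum (IEQ J N \<union> IIN J N) (Acf x) u (VG2 j k n)" using d2' j k n by blast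
    then show "0 \<le> (if n < N then u (RA j n) else 0) + (if 2 \<le> Suc n then u (RB k (Suc n)) else 0) + (x k - x j) * u (RD j n)
           - u (RE j n) + u (RE k (Suc n))"
      using colG2[OF j k nn, of x u] nn by (simp add: cv_def)
  qed auto
qed

lemma LH_to_dual:
  assumes N: "N \<ge> 1" and h: "LH_feasible N J a x t e1 e2 vv d1 d2"
  shows "dfeas (IEQ J N \<union> IIN J N) (IEQ J N) (VS J N) (Acf x) (cv a x t) (uof e1 e2 vv d1 d2)"
proof -
  note h' = h[unfolded LH_feasible_def]
  show ?thesis unfolding dfeas_def IEQ_IIN(2) ballIIN ballVS
  proof (intro conjI allI impI ballI)
    fix j n assume j: "j \<le> J" and n: "n \<in> {1..N}"
    show "uof e1 e2 vv d1 d2 (RE j n) \<ge> 0" using h' j n by (auto simp: uof_def)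
    show "cv a x t (VF j n) \<le> colsum (IEQ J N \<union> IIN J N) (Acf x) (uof e1 e2 vv d1 d2) (VF j n)"
      using h' j n colF[OF j, of n N x] by (auto simp: cv_def uof_def)
  next
    fix j k n assume j: "j \<le> J" and k: "k \<le> J" and n: "n \<in> {1..N-1}"
    have nn: "1 \<le> n" "n < N" using n N by auto
    show "cv a x t (VG1 j k n) \<le> colsum (IEQ J N \<union> IIN J N) (Acf x) (uof e1 e2 vv d1 d2) (VG1 j k n)"
      using h' j k n colG1[OF j k nn, of x] by (auto simp: cv_def uof_def)
    show "cv a x t (VG2 j k n) \<le> colsum (IEQ J N \<union> IIN J N) (Acf x) (uof e1 e2 vv d1 d2) (VG2 j k n)"
      using h' j k n colG2[OF j k nn, of x] by (auto simp: cv_def uof_def)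
  qed
qed

lemma obj_primal:
  "(\<Sum>v\<in>VS J N. cv a x t v * y v) = LP_obj N J a x t (\<lambda>j n. y (VF j n))"
  unfolding sumVS LP_obj_def cv_def by (simp, rule sum.swap)

lemma obj_dual:
  assumes N: "N \<ge> 1" and z: "\<forall>j\<le>J. e1 j N = 0 \<and> e2 j 1 = 0"
  shows "LH_obj N J p e1 e2 vv = (\<Sum>r\<in>IEQ J N \<union> IIN J N. bv p N r * uof e1 e2 vv d1 d2 r)"
proof -
  have s1: "{1..N} = insert N {1..N-1}" using N by auto
  have s2: "{1..N} = insert 1 {2..N}" using N by auto
  have A1: "(\<Sum>n\<in>{1..N}. e1 j n * p j n) = (\<Sum>n\<in>{1..N-1}. p j n * e1 j n)" if "j \<le> J" for j
    using z that N by (subst s1, subst sum.insert) (auto simp: mult.commute)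
  have A2: "(\<Sum>n\<in>{1..N}. e2 j n * p j n) = (\<Sum>n\<in>{2..N}. p j n * e2 j n)" if "j \<le> J" for j
    using z that N by (subst s2, subst sum.insert) (auto simp: mult.commute)
  have A3: "(\<Sum>n\<in>{1..N}. (if n = N then p j n else 0) * vv j n) = vv j N * p j N" for j
    using N by (simp add: if_mult0 sum.delta)
  have "LH_obj N J p e1 e2 vv = (\<Sum>j\<le>J. \<Sum>n\<in>{1..N}. e1 j n * p j n) + (\<Sum>j\<le>J. \<Sum>n\<in>{1..N}. e2 j n * p j n)
      + (\<Sum>j\<le>J. vv j N * p j N)"
  proof -
    have "(\<Sum>n\<in>{1..N}. \<Sum>j\<le>J. e1 j n * p j n) = (\<Sum>j\<le>J. \<Sum>n\<in>{1..N}. e1 j n * p j n)" by (rule sum.swap)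
    moreover have "(\<Sum>n\<in>{1..N}. \<Sum>j\<le>J. e2 j n * p j n) = (\<Sum>j\<le>J. \<Sum>n\<in>{1..N}. e2 j n * p j n)" by (rule sum.swap)
    ultimately show ?thesis unfolding LH_obj_def by (simp add: distrib_right sum.distrib)
  qed
  also have "\<dots> = (\<Sum>j\<le>J. \<Sum>n\<in>{1..N-1}. p j n * e1 j n) + (\<Sum>j\<le>J. \<Sum>n\<in>{2..N}. p j n * e2 j n)
      + (\<Sum>j\<le>J. \<Sum>n\<in>{1..N}. (if n = N then p j n else 0) * vv j n)"
    using A1 A2 A3 by simp
  also have "\<dots> = (\<Sum>r\<in>IEQ J N \<union> IIN J N. bv p N r * uof e1 e2 vv d1 d2 r)"
    unfolding sumIS sumIEQ sumIIN by (simp add: bv_def uof_def)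
  finally show ?thesis .
qed



theorem mainTheorem5:
  fixes N J :: nat and t x :: "nat \<Rightarrow> real" and s0 :: real
    and c :: "nat \<Rightarrow> nat \<Rightarrow> real" and a :: "real \<Rightarrow> real \<Rightarrow> real"
  assumes "market_data N J t s0 x c"
    and "\<forall>j\<le>J. \<forall>n\<in>{1..N}. a (x j) (t n) \<ge> 0"
  defines "p \<equiv> pr J s0 x c"
  shows "\<exists>f g1 g2 e1 e2 v d1 d2.
           LP_feasible N J x p f g1 g2 \<and>
           (\<forall>f' g1' g2'. LP_feasible N J x p f' g1' g2' \<longrightarrow> LP_obj N J a x t f' \<le> LP_obj N J a x t f) \<and>
           LH_feasible N J a x t e1 e2 v d1 d2 \<and>
           (\<forall>e1' e2' v' d1' d2'. LH_feasible N J a x t e1' e2' v' d1' d2' \<longrightarrow>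
               LH_obj N J p e1 e2 v \<le> LH_obj N J p e1' e2' v') \<and>
           LH_obj N J p e1 e2 v = LP_obj N J a x t f"
proof -
  note md = assms(1)
  have N: "N \<ge> 1" using md_facts(1)[OF md] .
  let ?I = "IEQ J N \<union> IIN J N"
  let ?V = "VS J N"
  let ?A = "Acf x"
  let ?b = "bv p N"
  let ?c = "cv a x t"
  have finI: "finite ?I" and finV: "finite ?V" using fin_sets by auto
  have subI: "IEQ J N \<subseteq> ?I" by auto
  have diffI: "?I - IEQ J N = IIN J N" by (rule IEQ_IIN(2))
  have pnn: "p j n \<ge> 0" if "j \<le> J" "n \<in> {1..N}" for j n
    unfolding p_def by (rule pr_nonneg[OF md that])
  have "\<exists>y. pfeas ?I (IEQ J N) ?V ?A ?b y"
  proof -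
    from farkas_mixed[OF finI finV subI order.refl, where A = ?A and b = ?b] show ?thesis
    proof
      assume "\<exists>y. (\<forall>v\<in>?V. y v \<ge> 0) \<and> (\<forall>i\<in>?I - IEQ J N. rowsum ?V ?A y i \<le> ?b i) \<and> (\<forall>i\<in>IEQ J N. rowsum ?V ?A y i = ?b i)"
      then show ?thesis unfolding pfeas_def by blast
    next
      assume "\<exists>u. (\<forall>i\<in>?I - IEQ J N. u i \<ge> 0) \<and> (\<forall>v\<in>?V. colsum ?I ?A u v \<ge> 0) \<and> (\<forall>v\<in>?V - ?V. colsum ?I ?A u v = 0)
          \<and> (\<Sum>i\<in>?I. ?b i * u i) < 0"
      then obtain u where u1: "\<forall>i\<in>IIN J N. u i \<ge> 0" and u2: "\<forall>v\<in>?V. colsum ?I ?A u v \<ge> 0"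
        and u3: "(\<Sum>i\<in>?I. ?b i * u i) < 0" unfolding diffI by blast
      have uE: "u (RE j n) \<ge> 0" if "j \<le> J" "n \<in> {1..N}" for j n using u1 that unfolding ballIIN by blast
      have S: "(\<Sum>j\<le>J. p j n * u (RA j n)) + (\<Sum>k\<le>J. p k (Suc n) * u (RB k (Suc n))) \<ge> 0"
        if n: "n \<in> {1..N-1}" for n
      proof -
        have nn: "1 \<le> n" "n < N" using n N by auto
        have "\<forall>j\<le>J. \<forall>k\<le>J. u (RA j n) + u (RB k (Suc n)) + (x k - x j) * u (RC j n) \<ge> 0"
        proof (intro allI impI)
          fix j k assume j: "j \<le> J" and k: "k \<le> J"
          have "colsum ?I ?A u (VG1 j k n) \<ge> 0" using u2 j k n unfolding ballVS by blast
          then show "u (RA j n) + u (RB k (Suc n)) + (x k - x j) * u (RC j n) \<ge> 0"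
            using colG1[OF j k nn, of x u] by simp
        qed
        from convex_order[OF md nn this] show ?thesis unfolding p_def .
      qed
      have "0 \<le> (\<Sum>n\<in>{1..N-1}. (\<Sum>j\<le>J. p j n * u (RA j n)) + (\<Sum>k\<le>J. p k (Suc n) * u (RB k (Suc n))))"
        using S by (intro sum_nonneg) auto
      also have "\<dots> = (\<Sum>j\<le>J. \<Sum>n\<in>{1..N-1}. p j n * u (RA j n)) + (\<Sum>j\<le>J. \<Sum>n\<in>{2..N}. p j n * u (RB j n))"
      proof -
        have e: "{2..N} = Suc ` {1..N-1}" using N by (auto simp: image_iff intro!: bexI[of _ "_ - 1"])
        have r: "(\<Sum>n\<in>{2..N}. p j n * u (RB j n)) = (\<Sum>n\<in>{1..N-1}. p j (Suc n) * u (RB j (Suc n)))" for j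
          unfolding e by (subst sum.reindex) auto
        have s1: "(\<Sum>n\<in>{1..N-1}. \<Sum>j\<le>J. p j n * u (RA j n)) = (\<Sum>j\<le>J. \<Sum>n\<in>{1..N-1}. p j n * u (RA j n))"
          by (rule sum.swap)
        have s2: "(\<Sum>n\<in>{1..N-1}. \<Sum>j\<le>J. p j (Suc n) * u (RB j (Suc n))) = (\<Sum>j\<le>J. \<Sum>n\<in>{1..N-1}. p j (Suc n) * u (RB j (Suc n)))"
          by (rule sum.swap)
        show ?thesis unfolding r sum.distrib s1 s2 ..
      qed
      also have "\<dots> \<le> (\<Sum>i\<in>?I. ?b i * u i)"
      proof -
        have "0 \<le> (\<Sum>j\<le>J. \<Sum>n\<in>{1..N}. (if n = N then p j n else 0) * u (RE j n))"
          using pnn uE by (intro sum_nonneg) auto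
        then show ?thesis unfolding sumIS sumIEQ sumIIN by (simp add: bv_def)
      qed
      finally show ?thesis using u3 by simp
    qed
  qed
  then obtain y0 where y0: "pfeas ?I (IEQ J N) ?V ?A ?b y0" by blast
  define M where "M = (\<Sum>j\<le>J. \<Sum>n\<in>{1..N}. a (x j) (t n))"
  define u0 where "u0 = (\<lambda>r. case r of RE j n \<Rightarrow> M | _ \<Rightarrow> 0)"
  have M0: "M \<ge> 0" unfolding M_def using assms(2) by (intro sum_nonneg) auto
  have Mge: "a (x j) (t n) \<le> M" if j: "j \<le> J" and n: "n \<in> {1..N}" for j n
  proof -
    have "a (x j) (t n) \<le> (\<Sum>n\<in>{1..N}. a (x j) (t n))"
      using assms(2) j n by (intro member_le_sum) auto
    also have "\<dots> \<le> M" unfolding M_def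
      using assms(2) j by (intro member_le_sum[where f = "\<lambda>j. \<Sum>n\<in>{1..N}. a (x j) (t n)"] sum_nonneg) auto
    finally show ?thesis .
  qed
  have u0: "dfeas ?I (IEQ J N) ?V ?A ?c u0"
    unfolding dfeas_def diffI ballIIN ballVS
  proof (intro conjI allI impI ballI)
    fix j n assume j: "j \<le> J" and n: "n \<in> {1..N}"
    show "u0 (RE j n) \<ge> 0" using M0 by (simp add: u0_def)
    have nn: "1 \<le> n" "n \<le> N" using n by auto
    show "?c (VF j n) \<le> colsum ?I ?A u0 (VF j n)"
      using colF[OF j nn, of x u0] Mge[OF j n] by (simp add: u0_def cv_def)
  next
    fix j k n assume j: "j \<le> J" and k: "k \<le> J" and n: "n \<in> {1..N-1}"
    have nn: "1 \<le> n" "n < N" using n N by auto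
    show "?c (VG1 j k n) \<le> colsum ?I ?A u0 (VG1 j k n)"
      using colG1[OF j k nn, of x u0] by (simp add: u0_def cv_def)
    show "?c (VG2 j k n) \<le> colsum ?I ?A u0 (VG2 j k n)"
      using colG2[OF j k nn, of x u0] by (simp add: u0_def cv_def)
  qed
  from lp_duality[OF finI finV subI y0 u0] obtain y u where
    py: "pfeas ?I (IEQ J N) ?V ?A ?b y" and du: "dfeas ?I (IEQ J N) ?V ?A ?c u"
    and eq: "(\<Sum>v\<in>?V. ?c v * y v) = (\<Sum>i\<in>?I. ?b i * u i)" by blast
  define f where "f = (\<lambda>j n. y (VF j n))"
  define g1 where "g1 = (\<lambda>j k n. y (VG1 j k n))"
  define g2 where "g2 = (\<lambda>j k n. y (VG2 j k n))"
  define e1 where "e1 = (\<lambda>j n. if n < N then u (RA j n) else 0)"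
  define e2 where "e2 = (\<lambda>j n. if 2 \<le> n then u (RB j n) else 0)"
  define vv where "vv = (\<lambda>j n. u (RE j n))"
  define d1 where "d1 = (\<lambda>j n. u (RC j n))"
  define d2 where "d2 = (\<lambda>j n. u (RD j n))"
  have LPf: "LP_feasible N J x p f g1 g2"
    using primal_equiv[OF N, where J=J and x=x and p=p and y=y] py unfolding f_def g1_def g2_def by blast
  have objf: "LP_obj N J a x t f = (\<Sum>v\<in>?V. ?c v * y v)"
    unfolding f_def by (rule obj_primal[symmetric])
  have LHf: "LH_feasible N J a x t e1 e2 vv d1 d2"
    unfolding e1_def e2_def vv_def d1_def d2_def by (rule dual_to_LH[OF N du])
  have objLH: "LH_obj N J p e1 e2 vv = (\<Sum>i\<in>?I. ?b i * u i)"
  proof -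
    have "LH_obj N J p e1 e2 vv = (\<Sum>r\<in>?I. ?b r * uof e1 e2 vv d1 d2 r)"
      by (rule obj_dual[OF N]) (simp add: e1_def e2_def)
    also have "\<dots> = (\<Sum>r\<in>?I. ?b r * u r)"
    proof (rule sum.cong[OF refl])
      fix r assume r: "r \<in> ?I"
      show "?b r * uof e1 e2 vv d1 d2 r = ?b r * u r"
        using r N unfolding IEQ_def IIN_def
        by (auto simp: uof_def e1_def e2_def vv_def d1_def d2_def split: if_split_asm)
    qed
    finally show ?thesis .
  qed
  show ?thesis
  proof (intro exI conjI allI impI)
    show "LP_feasible N J x p f g1 g2" by (rule LPf)
    show "LH_feasible N J a x t e1 e2 vv d1 d2" by (rule LHf)
    show "LH_obj N J p e1 e2 vv = LP_obj N J a x t f" using objLH objf eq by simp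
  next
    fix f' g1' g2' assume h: "LP_feasible N J x p f' g1' g2'"
    define y' where "y' = (\<lambda>v. case v of VF j n \<Rightarrow> f' j n | VG1 j k n \<Rightarrow> g1' j k n | VG2 j k n \<Rightarrow> g2' j k n)"
    have "(\<lambda>j n. y' (VF j n)) = f'" "(\<lambda>j k n. y' (VG1 j k n)) = g1'" "(\<lambda>j k n. y' (VG2 j k n)) = g2'"
      unfolding y'_def by auto
    then have py': "pfeas ?I (IEQ J N) ?V ?A ?b y'"
      using primal_equiv[OF N, where J=J and x=x and p=p and y=y'] h by simp
    have "LP_obj N J a x t f' = (\<Sum>v\<in>?V. ?c v * y' v)"
      using obj_primal[where a=a and x=x and t=t and J=J and N=N and y=y'] \<open>(\<lambda>j n. y' (VF j n)) = f'\<close> by simp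
    also have "\<dots> \<le> (\<Sum>i\<in>?I. ?b i * u i)" by (rule weak_duality[OF finI finV subI py' du])
    finally show "LP_obj N J a x t f' \<le> LP_obj N J a x t f" using objf eq by simp
  next
    fix e1' e2' v' d1' d2' assume h: "LH_feasible N J a x t e1' e2' v' d1' d2'"
    have z: "\<forall>j\<le>J. e1' j N = 0 \<and> e2' j 1 = 0" using h unfolding LH_feasible_def by blast
    have "LH_obj N J p e1 e2 vv = (\<Sum>v\<in>?V. ?c v * y v)" using objLH eq by simp
    also have "\<dots> \<le> (\<Sum>r\<in>?I. ?b r * uof e1' e2' v' d1' d2' r)"
      by (rule weak_duality[OF finI finV subI py LH_to_dual[OF N h]])
    also have "\<dots> = LH_obj N J p e1' e2' v'" by (rule obj_dual[OF N, symmetric]) (rule z)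
    finally show "LH_obj N J p e1 e2 vv \<le> LH_obj N J p e1' e2' v'" .
  qed
qed


end
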